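(* Consider the adoption–opinion model described in the context and suppose Assumption 1 (stated in the context) holds. If $s(0),a(0),d(0)\in[0,1]^n$ and $s(0)+a(0)+d(0)=\mathbf 1$, then $s(t),a(t),d(t)\in[0,1]^n$ and $s(t)+a(t)+d(t)=\mathbf 1$ for all $t\ge 0$. Moreover, if $x(0)\in[0,1]^n$, then $x(t)\in[0,1]^n$ for all $t\ge0$.
   Context: Let $n\ge1$ and $\mathcal V=\{1,\dots,n\}$ (communities). Let $W,\tilde W\in\mathbb R_+^{n\times n}$ be nonnegative matrices (physical and social interaction matrices). For each $i\in\mathcal V$ let $\beta_i,\gamma_i,\theta_i,\delta_i\in[0,1]$ and $\alpha_i,\lambda_i,\xi_i\ge0$ with $\alpha_i+\lambda_i+\xi_i=1$. The adoption–opinion model is the discrete-time system ($t\in\mathbb Z_+$), for all $i\in\mathcal V$: $s_i(t+1)=s_i(t)-\beta_i x_i(t)s_i(t)\sum_{j}W_{ij}a_j(t)+\gamma_i x_i(t)d_i(t)-\theta_i(1-x_i(t))s_i(t)$, $a_i(t+1)=a_i(t)+\beta_i x_i(t)s_i(t)\sum_{j}W_{ij}a_j(t)-\delta_i a_i(t)$, $d_i(t+1)=d_i(t)-\gamma_i x_i(t)d_i(t)+\theta_i(1-x_i(t))s_i(t)+\delta_i a_i(t)$, $x_i(t+1)=\alpha_i x_i(0)+\lambda_i\sum_j\tilde W_{ij}x_j(t)+\xi_i\sum_jW_{ij}a_j(t)$. Here $s_i,a_i,d_i$ are the fractions of susceptible, adopter and dissatisfied individuals in community $i$ and $x_i$ its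 opinion. Assumption 1: $W$ and $\tilde W$ are both row-stochastic and irreducible, and $\gamma_i+\theta_i\in(0,1)$ for all $i\in\mathcal V$. $\mathbf 1$ denotes the all-ones vector. *)

theory Defs
  imports Complex_Main
begin

definition row_stochastic :: "('n::finite \<Rightarrow> 'n \<Rightarrow> real) \<Rightarrow> bool" where
  "row_stochastic M \<longleftrightarrow> (\<forall>i j. M i j \<ge> 0) \<and> (\<forall>i. (\<Sum>j\<in>UNIV. M i j) = 1)"

definition irreducible_mat :: "('n::finite \<Rightarrow> 'n \<Rightarrow> real) \<Rightarrow> bool" where
  "irreducible_mat M \<longleftrightarrow> (\<forall>i j. (i, j) \<in> {(k, l). M k l > 0}\<^sup>+)"

end

theory Submission
  imports Defs
begin

lemma conv_sum01:
  fixes M :: "'n::finite \<Rightarrow> 'n \<Rightarrow> real"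
  assumes "row_stochastic M" and "\<And>j. v j \<in> {0..1}"
  shows "(\<Sum>j\<in>UNIV. M i j * v j) \<in> {0..1}"
proof -
  have nn: "\<And>j. M i j \<ge> 0" and s1: "(\<Sum>j\<in>UNIV. M i j) = 1"
    using assms(1) unfolding row_stochastic_def by auto
  have "(\<Sum>j\<in>UNIV. M i j * v j) \<ge> 0"
    by (rule sum_nonneg) (use nn assms(2) in auto)
  moreover have "(\<Sum>j\<in>UNIV. M i j * v j) \<le> (\<Sum>j\<in>UNIV. M i j)"
    by (rule sum_mono) (use nn assms(2) in \<open>auto intro: mult_left_le\<close>)
  ultimately show ?thesis using s1 by auto
qed

lemma p_le: "(0::real) \<le> b \<Longrightarrow> b \<le> 1 \<Longrightarrow> 0 \<le> x \<Longrightarrow> 0 \<le> s \<Longrightarrow> 0 \<le> w \<Longrightarrow> w \<le> 1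
   \<Longrightarrow> b * x * s * w \<le> x * s"
proof -
  assume h: "(0::real) \<le> b" "b \<le> 1" "0 \<le> x" "0 \<le> s" "0 \<le> w" "w \<le> 1"
  have "b * w \<le> 1" using h by (simp add: mult_le_one)
  hence "(b * w) * (x * s) \<le> 1 * (x * s)" using h by (intro mult_right_mono) auto
  thus ?thesis by (simp add: algebra_simps)
qed

lemma q_le: "(0::real) \<le> c \<Longrightarrow> c \<le> 1 \<Longrightarrow> 0 \<le> y \<Longrightarrow> c * y \<le> y"
  by (simp add: mult_left_le_one_le)

theorem proposition1:
  fixes W Wt :: "'n::finite \<Rightarrow> 'n \<Rightarrow> real"
    and \<beta> \<gamma> \<theta> \<delta> \<alpha> lam \<xi> :: "'n \<Rightarrow> real"
    and s a d x :: "nat \<Rightarrow> 'n \<Rightarrow> real"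
  assumes W_stoch: "row_stochastic W" and W_irr: "irreducible_mat W"
    and Wt_stoch: "row_stochastic Wt" and Wt_irr: "irreducible_mat Wt"
    and params01: "\<And>i. \<beta> i \<in> {0..1} \<and> \<gamma> i \<in> {0..1} \<and> \<theta> i \<in> {0..1} \<and> \<delta> i \<in> {0..1}"
    and weights: "\<And>i. \<alpha> i \<ge> 0 \<and> lam i \<ge> 0 \<and> \<xi> i \<ge> 0 \<and> \<alpha> i + lam i + \<xi> i = 1"
    and gt: "\<And>i. \<gamma> i + \<theta> i \<in> {0<..<1}"
    and s_step: "\<And>t i. s (Suc t) i = s t i - \<beta> i * x t i * s t i * (\<Sum>j\<in>UNIV. W i j * a t j)
                         + \<gamma> i * x t i * d t i - \<theta> i * (1 - x t i) * s t i"
    and a_step: "\<And>t i. a (Suc t) i = a t i + \<beta> i * x t i * s t i * (\<Sum>j\<in>UNIV. W i j * a t j)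
                         - \<delta> i * a t i"
    and d_step: "\<And>t i. d (Suc t) i = d t i - \<gamma> i * x t i * d t i
                         + \<theta> i * (1 - x t i) * s t i + \<delta> i * a t i"
    and x_step: "\<And>t i. x (Suc t) i = \<alpha> i * x 0 i + lam i * (\<Sum>j\<in>UNIV. Wt i j * x t j)
                         + \<xi> i * (\<Sum>j\<in>UNIV. W i j * a t j)"
    and init_sad: "\<And>i. s 0 i \<in> {0..1} \<and> a 0 i \<in> {0..1} \<and> d 0 i \<in> {0..1}"
    and init_sum: "\<And>i. s 0 i + a 0 i + d 0 i = 1"
    and init_x: "\<And>i. x 0 i \<in> {0..1}"
  shows "(\<forall>t i. s t i \<in> {0..1} \<and> a t i \<in> {0..1} \<and> d t i \<in> {0..1}
                \<and> s t i + a t i + d t i = 1)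
         \<and> (\<forall>t i. x t i \<in> {0..1})"
proof -
  have main: "\<forall>i. s t i \<in> {0..1} \<and> a t i \<in> {0..1} \<and> d t i \<in> {0..1}
                \<and> s t i + a t i + d t i = 1 \<and> x t i \<in> {0..1}" for t
  proof (induction t)
    case 0
    then show ?case using init_sad init_sum init_x by auto
  next
    case (Suc t)
    show ?case
    proof
      fix i
      define w where "w = (\<Sum>j\<in>UNIV. W i j * a t j)"
      define v where "v = (\<Sum>j\<in>UNIV. Wt i j * x t j)"
      have w01: "w \<in> {0..1}" unfolding w_def
        by (rule conv_sum01[OF W_stoch]) (use Suc.IH in auto)
      have v01: "v \<in> {0..1}" unfolding v_def
        by (rule conv_sum01[OF Wt_stoch]) (use Suc.IH in auto)
      have S: "s t i \<in> {0..1}" "a t i \<in> {0..1}" "d t i \<in> {0..1}"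
        "s t i + a t i + d t i = 1" "x t i \<in> {0..1}" using Suc.IH by auto
      have P: "\<beta> i \<in> {0..1}" "\<gamma> i \<in> {0..1}" "\<theta> i \<in> {0..1}" "\<delta> i \<in> {0..1}"
        using params01 by auto
      define p where "p = \<beta> i * x t i * s t i * w"
      define q where "q = \<theta> i * ((1 - x t i) * s t i)"
      define r where "r = \<gamma> i * (x t i * d t i)"
      define u where "u = \<delta> i * a t i"
      have sE: "s (Suc t) i = s t i - p + r - q"
        using s_step[of t i] unfolding p_def q_def r_def w_def by (simp add: algebra_simps)
      have aE: "a (Suc t) i = a t i + p - u"
        using a_step[of t i] unfolding p_def u_def w_def by (simp add: algebra_simps)
      have dE: "d (Suc t) i = d t i - r + q + u"
        using d_step[of t i] unfolding q_def r_def u_def by (simp add: algebra_simps)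
      have xE: "x (Suc t) i = \<alpha> i * x 0 i + lam i * v + \<xi> i * w"
        using x_step[of t i] unfolding v_def w_def by simp
      have p0: "0 \<le> p" unfolding p_def using P S w01 by auto
      have p1: "p \<le> x t i * s t i" unfolding p_def using P S w01 by (intro p_le) auto
      have xs: "x t i * s t i \<le> s t i" using S by (intro mult_left_le_one_le) auto
      have q0: "0 \<le> q" unfolding q_def using P S by auto
      have q1: "q \<le> (1 - x t i) * s t i" unfolding q_def using P S by (intro q_le) auto
      have r0: "0 \<le> r" unfolding r_def using P S by auto
      have r1: "r \<le> x t i * d t i" unfolding r_def using P S by (intro q_le) auto
      have xd: "x t i * d t i \<le> d t i" using S by (intro mult_left_le_one_le) auto
      have u0: "0 \<le> u" unfolding u_def using P S by auto
      have u1: "u \<le> a t i" unfolding u_def using P S by (intro q_le) auto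
      have split: "x t i * s t i + (1 - x t i) * s t i = s t i" by (simp add: algebra_simps)
      have wt: "\<alpha> i \<ge> 0" "lam i \<ge> 0" "\<xi> i \<ge> 0" "\<alpha> i + lam i + \<xi> i = 1" using weights by auto
      have x0: "x 0 i \<in> {0..1}" using init_x by auto
      have m1: "\<alpha> i * x 0 i \<le> \<alpha> i" "lam i * v \<le> lam i" "\<xi> i * w \<le> \<xi> i"
        using wt x0 v01 w01 by (auto intro: mult_left_le)
      have m0: "\<alpha> i * x 0 i \<ge> 0" "lam i * v \<ge> 0" "\<xi> i * w \<ge> 0"
        using wt x0 v01 w01 by auto
      show "s (Suc t) i \<in> {0..1} \<and> a (Suc t) i \<in> {0..1} \<and> d (Suc t) i \<in> {0..1}
                \<and> s (Suc t) i + a (Suc t) i + d (Suc t) i = 1 \<and> x (Suc t) i \<in> {0..1}"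
        unfolding sE aE dE xE using S p0 p1 xs q0 q1 r0 r1 xd u0 u1 split m0 m1 wt
        by auto
    qed
  qed
  show ?thesis using main by blast
qed

end
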